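(* Let $d:[0,1]^2\to\mathbb{R}$ be a convex function and let $\ell_1,\dots,\ell_t$ be an $\epsilon$-approximate family of $d$. Let $\mathcal{C}\subset[0,1]^2$ be a point set. For each $i$, let $(x_i^*,y_i^* )=\arg\max_{\mathbf{p}\in\mathcal{C}}\ell_i(\mathbf{p}_x,\mathbf{p}_y)$, and let $(x^*,y^* )$ be the point $(x_i^*,y_i^* )$ maximizing $\ell_i(x_i^*,y_i^* )$ over $i=1,\dots,t$. Let $d^*=\sup_{\mathbf{p}\in\mathcal{C}}d(\mathbf{p}_x,\mathbf{p}_y)$, $d_{\inf}=\inf_{\mathbf{q}\in[0,1]^2}d(\mathbf{q}_x,\mathbf{q}_y)$, and $m=\max(l^U(x^*,y^* ),d_{\inf})$. Then $$m\le d^*\le m+\epsilon.$$ If instead $\ell_1,\dots,\ell_t$ is a relative $\epsilon$-approximate family of $d$ (with the same definitions of $x_i^*,y_i^*,x^*,y^*,d^*,d_{\inf},m$), then $$m\le d^*\le(1+\epsilon)m.$$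
   Context: A linear function is $\ell(x,y)=a_1x+a_2y+a_3$. For linear functions $\ell_1,\dots,\ell_t$, their upper envelope is $l^U(x,y)=\max_{i\le t}\ell_i(x,y)$. The collection $\ell_1,\dots,\ell_t$ is an $\epsilon$-approximate family of $d$ if $l^U(x,y)\le d(x,y)\le l^U(x,y)+\epsilon$ for all $(x,y)\in[0,1]^2$; it is a relative $\epsilon$-approximate family of $d$ if $l^U(x,y)\le d(x,y)\le(1+\epsilon)l^U(x,y)$ for all $(x,y)\in[0,1]^2$. *)

theory Defs
  imports "HOL-Analysis.Analysis"
begin

definition unit_square :: "(real \<times> real) set" where
  "unit_square = {0..1} \<times> {0..1}"

definition lin :: "real \<times> real \<times> real \<Rightarrow> real \<times> real \<Rightarrow> real" where
  "lin a p = fst a * fst p + fst (snd a) * snd p + snd (snd a)"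

definition upper_env :: "(nat \<Rightarrow> real \<times> real \<times> real) \<Rightarrow> nat \<Rightarrow> real \<times> real \<Rightarrow> real" where
  "upper_env a t p = Max ((\<lambda>i. lin (a i) p) ` {1..t})"

definition approx_family ::
  "(nat \<Rightarrow> real \<times> real \<times> real) \<Rightarrow> nat \<Rightarrow> real \<Rightarrow> (real \<times> real \<Rightarrow> real) \<Rightarrow> bool" where
  "approx_family a t \<epsilon> d \<longleftrightarrow>
     (\<forall>p\<in>unit_square. upper_env a t p \<le> d p \<and> d p \<le> upper_env a t p + \<epsilon>)"

definition rel_approx_family ::
  "(nat \<Rightarrow> real \<times> real \<times> real) \<Rightarrow> nat \<Rightarrow> real \<Rightarrow> (real \<times> real \<Rightarrow> real) \<Rightarrow> bool" where
  "rel_approx_family a t \<epsilon> d \<longleftrightarrow>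
     (\<forall>p\<in>unit_square. upper_env a t p \<le> d p \<and> d p \<le> (1 + \<epsilon>) * upper_env a t p)"

end

theory Submission
  imports Defs
begin

lemma ue_ge: "i \<in> {1..t} \<Longrightarrow> lin (a i) p \<le> upper_env a t p"
  unfolding upper_env_def by (rule Max_ge) auto

lemma ue_le: "t \<ge> 1 \<Longrightarrow> (\<And>i. i \<in> {1..t} \<Longrightarrow> lin (a i) p \<le> B) \<Longrightarrow> upper_env a t p \<le> B"
  unfolding upper_env_def by (subst Max_le_iff) auto

lemma lin_lower: "p \<in> unit_square \<Longrightarrow> - (\<bar>fst a\<bar> + \<bar>fst (snd a)\<bar> + \<bar>snd (snd a)\<bar>) \<le> lin a p"
proof -
  assume p: "p \<in> unit_square"
  obtain x y where xy: "p = (x, y)" "0 \<le> x" "x \<le> 1" "0 \<le> y" "y \<le> 1"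
    using p unfolding unit_square_def by auto
  have "- \<bar>fst a\<bar> \<le> fst a * x"
    using xy by (smt (verit) abs_ge_self mult_left_le mult_minus_left abs_minus_cancel mult_nonneg_nonneg)
  moreover have "- \<bar>fst (snd a)\<bar> \<le> fst (snd a) * y"
    using xy by (smt (verit) abs_ge_self mult_left_le mult_minus_left abs_minus_cancel mult_nonneg_nonneg)
  ultimately show ?thesis unfolding lin_def using xy by simp
qed

theorem lemma4p1:
  fixes d :: "real \<times> real \<Rightarrow> real"
    and a :: "nat \<Rightarrow> real \<times> real \<times> real"
    and t :: nat and \<epsilon> :: real
    and C :: "(real \<times> real) set"
    and ps :: "nat \<Rightarrow> real \<times> real"
    and istar :: nat
  assumes conv: "convex_on unit_square d"
    and t: "t \<ge> 1"
    and eps: "\<epsilon> > 0"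
    and C: "C \<subseteq> unit_square"
    and ps: "\<forall>i\<in>{1..t}. ps i \<in> C \<and> (\<forall>p\<in>C. lin (a i) p \<le> lin (a i) (ps i))"
    and istar: "istar \<in> {1..t}"
    and istar_max: "\<forall>i\<in>{1..t}. lin (a i) (ps i) \<le> lin (a istar) (ps istar)"
  shows "(approx_family a t \<epsilon> d \<longrightarrow>
            max (upper_env a t (ps istar)) (INF q\<in>unit_square. d q) \<le> (SUP p\<in>C. d p) \<and>
            (SUP p\<in>C. d p) \<le> max (upper_env a t (ps istar)) (INF q\<in>unit_square. d q) + \<epsilon>)
       \<and> (rel_approx_family a t \<epsilon> d \<longrightarrow>
            max (upper_env a t (ps istar)) (INF q\<in>unit_square. d q) \<le> (SUP p\<in>C. d p) \<and>
            (SUP p\<in>C. d p) \<le> (1 + \<epsilon>) * max (upper_env a t (ps istar)) (INF q\<in>unit_square. d q))"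
proof -
  define L where "L = upper_env a t (ps istar)"
  define I where "I = (INF q\<in>unit_square. d q)"
  define m where "m = max L I"
  have psC: "ps istar \<in> C" using ps istar by auto
  have psU: "ps istar \<in> unit_square" using psC C by auto
  have Cne: "C \<noteq> {}" using psC by auto
  have UL: "upper_env a t p \<le> L" if "p \<in> C" for p
    unfolding L_def
  proof (rule ue_le[OF t])
    fix i assume i: "i \<in> {1..t}"
    have "lin (a i) p \<le> lin (a i) (ps i)" using ps i that by auto
    also have "\<dots> \<le> lin (a istar) (ps istar)" using istar_max i by auto
    also have "\<dots> \<le> upper_env a t (ps istar)" by (rule ue_ge[OF istar])
    finally show "lin (a i) p \<le> upper_env a t (ps istar)" .
  qed
  have one: "(1::nat) \<in> {1..t}" using t by auto
  define K where "K = - (\<bar>fst (a 1)\<bar> + \<bar>fst (snd (a 1))\<bar> + \<bar>snd (snd (a 1))\<bar>)"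
  have lowU: "K \<le> upper_env a t q" if "q \<in> unit_square" for q
    using lin_lower[OF that, of "a 1"] ue_ge[OF one, of a q] unfolding K_def by linarith
  have main: "m \<le> (SUP p\<in>C. d p) \<and> (SUP p\<in>C. d p) \<le> B"
    if lowd: "\<And>q. q \<in> unit_square \<Longrightarrow> upper_env a t q \<le> d q"
      and upd: "\<And>p. p \<in> C \<Longrightarrow> d p \<le> B" for B
  proof -
    have bddA: "bdd_above (d ` C)" using upd by (intro bdd_aboveI2[where M=B]) blast
    have bddB: "bdd_below (d ` unit_square)"
      using lowd lowU by (intro bdd_belowI2[where m=K]) (meson order_trans)
    have dS: "d (ps istar) \<le> (SUP p\<in>C. d p)" by (rule cSUP_upper[OF psC bddA])
    have "L \<le> d (ps istar)" unfolding L_def using lowd psU by auto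
    moreover have "I \<le> d (ps istar)" unfolding I_def by (rule cINF_lower[OF bddB psU])
    ultimately have "m \<le> (SUP p\<in>C. d p)" unfolding m_def using dS by auto
    moreover have "(SUP p\<in>C. d p) \<le> B" using Cne upd by (intro cSUP_least) auto
    ultimately show ?thesis by auto
  qed
  have A: "approx_family a t \<epsilon> d \<longrightarrow> m \<le> (SUP p\<in>C. d p) \<and> (SUP p\<in>C. d p) \<le> m + \<epsilon>"
  proof
    assume af: "approx_family a t \<epsilon> d"
    show "m \<le> (SUP p\<in>C. d p) \<and> (SUP p\<in>C. d p) \<le> m + \<epsilon>"
    proof (rule main)
      fix q assume "q \<in> unit_square" then show "upper_env a t q \<le> d q"
        using af unfolding approx_family_def by auto
    next
      fix p assume p: "p \<in> C"
      then have "d p \<le> upper_env a t p + \<epsilon>" using af C unfolding approx_family_def by auto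
      then show "d p \<le> m + \<epsilon>" using UL[OF p] unfolding m_def by auto
    qed
  qed
  have B: "rel_approx_family a t \<epsilon> d \<longrightarrow> m \<le> (SUP p\<in>C. d p) \<and> (SUP p\<in>C. d p) \<le> (1 + \<epsilon>) * m"
  proof
    assume af: "rel_approx_family a t \<epsilon> d"
    show "m \<le> (SUP p\<in>C. d p) \<and> (SUP p\<in>C. d p) \<le> (1 + \<epsilon>) * m"
    proof (rule main)
      fix q assume "q \<in> unit_square" then show "upper_env a t q \<le> d q"
        using af unfolding rel_approx_family_def by auto
    next
      fix p assume p: "p \<in> C"
      then have "d p \<le> (1 + \<epsilon>) * upper_env a t p" using af C unfolding rel_approx_family_def by auto
      also have "\<dots> \<le> (1 + \<epsilon>) * m"
        using UL[OF p] eps unfolding m_def by (intro mult_left_mono) auto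
      finally show "d p \<le> (1 + \<epsilon>) * m" .
    qed
  qed
  show ?thesis using A B unfolding m_def L_def I_def by blast
qed

end
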